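(* Consider the hypercube-based interactive proof of knowledge for the Rank Syndrome Decoding relation described in the context. If the prover knows $\mathbf{x}\in\mathbb{F}_{q^m}^n$ with $\mathbf{H}\mathbf{x}=\mathbf{y}$ and $W_R(\mathbf{x})\le r$ and executes the protocol correctly, then the verifier accepts with probability $1$ (the protocol is perfectly complete).
   Context: Let $q$ be a prime power, $m,n,k,r,\eta$ positive integers, $\mathbb{F}_{q^m}$ the field with $q^m$ elements and $\mathbb{F}_{q^{m\eta}}$ its degree-$\eta$ extension. For $\mathbf{x}=(x_1,\dots,x_n)\in\mathbb{F}_{q^m}^n$, its rank weight $W_R(\mathbf{x})$ is the dimension of the $\mathbb{F}_q$-span $U=\langle x_1,\dots,x_n\rangle$. A Rank-SD instance is $\mathbf{H}=(\mathbf{I}_{n-k}\,\|\,\mathbf{H}')\in\mathbb{F}_{q^m}^{(n-k)\times n}$, $\mathbf{y}\in\mathbb{F}_{q^m}^{n-k}$; a witness is $\mathbf{x}$ with $\mathbf{H}\mathbf{x}=\mathbf{y}$ and $W_R(\mathbf{x})\le r$. Writing $\mathbf{x}=(\mathbf{x}_A\|\mathbf{x}_B)$ with $\mathbf{x}_A\in\mathbb{F}_{q^m}^{n-k}$, one has $\mathbf{x}_A=\mathbf{y}-\mathbf{H}'\mathbf{x}_B$. Assuming $1\in U$ and $\dim U=r$, the annihilator polynomial $L(X)=\prod_{u\in U}(X-u)$ can be written $L(X)=(X^{q^r}-X)+\sum_{i=1}^{r-1}\beta_i(X^{q^i}-X)$, $\boldsymbol\beta=(\beta_1,\dots,\beta_{r-1})$.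 MPC protocol $\Pi^\eta$ (on linear sharings $[\![\cdot]\!]$): inputs are sharings of $\mathbf{x}_B$, $\boldsymbol\beta$, a uniformly random $\mathbf{a}\in\mathbb{F}_{q^{m\eta}}^{r-1}$ and $c=-\langle\boldsymbol\beta,\mathbf{a}\rangle$. Given public random $\gamma_1,\dots,\gamma_n,\varepsilon\in\mathbb{F}_{q^{m\eta}}$, parties compute $[\![\mathbf{x}_A]\!]=\mathbf{y}-\mathbf{H}'[\![\mathbf{x}_B]\!]$, $[\![z]\!]=-\sum_j\gamma_j([\![x_j]\!]^{q^r}-[\![x_j]\!])$, $[\![\omega_i]\!]=\sum_j\gamma_j([\![x_j]\!]^{q^i}-[\![x_j]\!])$ for $1\le i\le r-1$, open $\boldsymbol\alpha=\varepsilon\boldsymbol\omega+\mathbf{a}$, compute and open $v=\varepsilon z-\langle\boldsymbol\alpha,\boldsymbol\beta\rangle-c$, and accept iff $v=0$. Hypercube protocol: $N=2^D$ leaf parties indexed by $(i_1,\dots,i_D)\in\{1,2\}^D$. The prover additively shares $\mathbf{x}_B,\boldsymbol\beta,\mathbf{a},c$ among the leaves (leaf shares derived from seeds of a GGM tree, the last leaf's shares of $\mathbf{x}_B,\boldsymbol\beta,c$ being corrected so the sums are correct), commits each leaf state with a commitment scheme, and sends $h_0$, a hash of all leaf commitments. The verifier sends $((\gamma_j)_j,\varepsilon)$ uniform in $\mathbb{F}_{q^{m\eta}}^{n+1}$. For each dimension $d\in\{1,\dots,D\}$, the two main parties $(d,1),(d,2)$ hold the sums of the leaf shares with $i_d=1$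 (resp. $2$); the prover runs $\Pi^\eta$ on them, obtaining shares of $\boldsymbol\alpha$ and $v$, sets $H_d$ = hash of these shares, and sends $h_1=\mathrm{Hash}(H_1,\dots,H_D)$. The verifier sends $i^*$ uniform in $\{1,\dots,N\}$. The prover reveals the states of all leaves except $i^*$ (via GGM sibling path and, if $i^*\ne N$, the correction shares of leaf $N$), the commitment of leaf $i^*$, and the share of $\boldsymbol\alpha$ of leaf $i^*$. The verifier recomputes $h_0$, recomputes each dimension's execution (setting the share of the main party containing $i^*$ so that $v=0$), and accepts iff $\boldsymbol\alpha$ is the same for all $D$ executions and the recomputed $h_0,h_1$ match. *)

theory Defs
  imports "HOL-Computational_Algebra.Polynomial"
begin

section \<open>Finite-field notions (everything lives inside the big field 'k = F_{q^(m eta)})\<close>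

text \<open>Subfield F_{q^e} of 'k, as the set of fixed points of x \<mapsto> x^(q^e).\<close>
definition subfield_of :: "nat \<Rightarrow> ('k::field) set" where
  "subfield_of Q = {a. a ^ Q = a}"

definition fq_span :: "nat \<Rightarrow> ('k::field) set \<Rightarrow> 'k set" where
  "fq_span q S = {v. \<exists>T c. finite T \<and> T \<subseteq> S \<and> (\<forall>t\<in>T. c t \<in> subfield_of q)
                        \<and> v = (\<Sum>t\<in>T. c t * t)}"

definition fq_independent :: "nat \<Rightarrow> ('k::field) set \<Rightarrow> bool" where
  "fq_independent q B \<longleftrightarrow> (\<forall>T c. finite T \<and> T \<subseteq> B \<and> (\<forall>t\<in>T. c t \<in> subfield_of q)
        \<and> (\<Sum>t\<in>T. c t * t) = 0 \<longrightarrow> (\<forall>t\<in>T. c t = 0))"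

definition fq_dim :: "nat \<Rightarrow> ('k::field) set \<Rightarrow> nat" where
  "fq_dim q V = card (SOME B. B \<subseteq> V \<and> fq_independent q B \<and> fq_span q B = V)"

definition rank_weight :: "nat \<Rightarrow> nat \<Rightarrow> (nat \<Rightarrow> 'k::field) \<Rightarrow> nat" where
  "rank_weight q n x = fq_dim q (fq_span q (x ` {..<n}))"

text \<open>Public data: H = (I_{n-k} | H'), H' given entrywise (rows i<n-k, columns j<k), y.\<close>
record 'k pub =
  qq :: nat
  rr :: nat
  nn :: nat
  kk :: nat
  Hp :: "nat \<Rightarrow> nat \<Rightarrow> 'k"
  yv :: "nat \<Rightarrow> 'k"

text \<open>Additive share held by a (leaf or main) party: shares of x_B (indices <k),
  beta (indices 1..r-1), a (indices 1..r-1) and c.\<close>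
record 'k shr =
  sxb :: "nat \<Rightarrow> 'k"
  sbt :: "nat \<Rightarrow> 'k"
  sa  :: "nat \<Rightarrow> 'k"
  sc  :: "'k"

definition shr_sum :: "nat set \<Rightarrow> (nat \<Rightarrow> ('k::comm_monoid_add) shr) \<Rightarrow> 'k shr" where
  "shr_sum S f = \<lparr>sxb = (\<lambda>j. \<Sum>i\<in>S. sxb (f i) j), sbt = (\<lambda>j. \<Sum>i\<in>S. sbt (f i) j),
                   sa = (\<lambda>j. \<Sum>i\<in>S. sa (f i) j), sc = (\<Sum>i\<in>S. sc (f i))\<rparr>"

text \<open>Local computations of one party. The flag \<open>lead\<close> says whether this party adds the
  public constants (y) of the affine maps.\<close>
definition xA_sh :: "'k::field pub \<Rightarrow> bool \<Rightarrow> 'k shr \<Rightarrow> nat \<Rightarrow> 'k" where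
  "xA_sh P lead s i = (if lead then yv P i else 0) - (\<Sum>j<kk P. Hp P i j * sxb s j)"

definition x_sh :: "'k::field pub \<Rightarrow> bool \<Rightarrow> 'k shr \<Rightarrow> nat \<Rightarrow> 'k" where
  "x_sh P lead s j = (if j < nn P - kk P then xA_sh P lead s j else sxb s (j - (nn P - kk P)))"

definition z_sh :: "'k::field pub \<Rightarrow> (nat \<Rightarrow> 'k) \<Rightarrow> bool \<Rightarrow> 'k shr \<Rightarrow> 'k" where
  "z_sh P gam lead s =
     - (\<Sum>j<nn P. gam j * (x_sh P lead s j ^ (qq P ^ rr P) - x_sh P lead s j))"

definition omega_sh :: "'k::field pub \<Rightarrow> (nat \<Rightarrow> 'k) \<Rightarrow> bool \<Rightarrow> 'k shr \<Rightarrow> nat \<Rightarrow> 'k" where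
  "omega_sh P gam lead s i =
     (\<Sum>j<nn P. gam j * (x_sh P lead s j ^ (qq P ^ i) - x_sh P lead s j))"

definition alpha_sh :: "'k::field pub \<Rightarrow> (nat \<Rightarrow> 'k) \<Rightarrow> 'k \<Rightarrow> bool \<Rightarrow> 'k shr \<Rightarrow> nat \<Rightarrow> 'k" where
  "alpha_sh P gam eps lead s i = eps * omega_sh P gam lead s i + sa s i"

definition v_sh :: "'k::field pub \<Rightarrow> (nat \<Rightarrow> 'k) \<Rightarrow> 'k \<Rightarrow> (nat \<Rightarrow> 'k) \<Rightarrow> bool \<Rightarrow> 'k shr \<Rightarrow> 'k" where
  "v_sh P gam eps alpha lead s =
     eps * z_sh P gam lead s - (\<Sum>i\<in>{1..<rr P}. alpha i * sbt s i) - sc s"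

text \<open>Leaves are indexed 0..<N, N = 2^D; leaf i corresponds to (i_1,...,i_D) with
  i_d = bit (d-1) of i plus 1. Leaf 0 = (1,...,1) carries the public constants,
  leaf N-1 = (2,...,2) is the corrected leaf.\<close>
definition bit_of :: "nat \<Rightarrow> nat \<Rightarrow> nat" where
  "bit_of d i = (i div 2 ^ d) mod 2"

record ('sd, 'k, 'cm, 'h, 'h1) prims =
  prg :: "'sd \<Rightarrow> 'sd \<times> 'sd"
  expand :: "'sd \<Rightarrow> 'k shr"
  com :: "'sd \<times> 'k shr option \<Rightarrow> 'cm"
  hash0 :: "'cm list \<Rightarrow> 'h"
  hashd :: "'k list \<times> 'k list \<times> 'k \<times> 'k \<Rightarrow> 'h1"
  hash1 :: "'h1 list \<Rightarrow> 'h"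

fun ggm :: "('sd \<Rightarrow> 'sd \<times> 'sd) \<Rightarrow> 'sd \<Rightarrow> nat \<Rightarrow> nat \<Rightarrow> 'sd" where
  "ggm G s 0 j = s"
| "ggm G s (Suc l) j = (if even j then fst else snd) (G (ggm G s l (j div 2)))"

definition sibling :: "nat \<Rightarrow> nat" where
  "sibling j = (if even j then j + 1 else j - 1)"

text \<open>Leaf state = (seed, correction); only the last leaf has a correction, which
  replaces its x_B-, beta- and c-shares.\<close>
definition leaf_sh :: "('sd \<Rightarrow> 'k shr) \<Rightarrow> 'sd \<times> 'k shr option \<Rightarrow> 'k shr" where
  "leaf_sh E st = (case snd st of None \<Rightarrow> E (fst st)
     | Some cr \<Rightarrow> (E (fst st))\<lparr>sxb := sxb cr, sbt := sbt cr, sc := sc cr\<rparr>)"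

definition pr_seed :: "('sd,'k,'cm,'h,'h1) prims \<Rightarrow> nat \<Rightarrow> 'sd \<Rightarrow> nat \<Rightarrow> 'sd" where
  "pr_seed Pr D sd0 i = ggm (prg Pr) sd0 D i"

definition pr_a :: "('sd,'k::field,'cm,'h,'h1) prims \<Rightarrow> nat \<Rightarrow> 'sd \<Rightarrow> nat \<Rightarrow> 'k" where
  "pr_a Pr D sd0 i = (\<Sum>l<2^D. sa (expand Pr (pr_seed Pr D sd0 l)) i)"

definition pr_c :: "'k::field pub \<Rightarrow> ('sd,'k,'cm,'h,'h1) prims \<Rightarrow> nat \<Rightarrow> 'sd \<Rightarrow> (nat \<Rightarrow> 'k) \<Rightarrow> 'k" where
  "pr_c P Pr D sd0 beta = - (\<Sum>i\<in>{1..<rr P}. beta i * pr_a Pr D sd0 i)"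

text \<open>Correction for the last leaf: makes the sums of the shares equal x_B, beta, c.\<close>
definition pr_aux :: "'k::field pub \<Rightarrow> ('sd,'k,'cm,'h,'h1) prims \<Rightarrow> nat \<Rightarrow> 'sd
     \<Rightarrow> (nat \<Rightarrow> 'k) \<Rightarrow> (nat \<Rightarrow> 'k) \<Rightarrow> 'k shr" where
  "pr_aux P Pr D sd0 x beta =
     \<lparr>sxb = (\<lambda>j. x (nn P - kk P + j) - (\<Sum>l<2^D - 1. sxb (expand Pr (pr_seed Pr D sd0 l)) j)),
      sbt = (\<lambda>i. beta i - (\<Sum>l<2^D - 1. sbt (expand Pr (pr_seed Pr D sd0 l)) i)),
      sa = (\<lambda>_. 0),
      sc = pr_c P Pr D sd0 beta - (\<Sum>l<2^D - 1. sc (expand Pr (pr_seed Pr D sd0 l)))\<rparr>"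

definition pr_state :: "'k::field pub \<Rightarrow> ('sd,'k,'cm,'h,'h1) prims \<Rightarrow> nat \<Rightarrow> 'sd
     \<Rightarrow> (nat \<Rightarrow> 'k) \<Rightarrow> (nat \<Rightarrow> 'k) \<Rightarrow> nat \<Rightarrow> 'sd \<times> 'k shr option" where
  "pr_state P Pr D sd0 x beta i =
     (pr_seed Pr D sd0 i, if i = 2^D - 1 then Some (pr_aux P Pr D sd0 x beta) else None)"

definition pr_leaf :: "'k::field pub \<Rightarrow> ('sd,'k,'cm,'h,'h1) prims \<Rightarrow> nat \<Rightarrow> 'sd
     \<Rightarrow> (nat \<Rightarrow> 'k) \<Rightarrow> (nat \<Rightarrow> 'k) \<Rightarrow> nat \<Rightarrow> 'k shr" where
  "pr_leaf P Pr D sd0 x beta i = leaf_sh (expand Pr) (pr_state P Pr D sd0 x beta i)"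

definition pr_h0 :: "'k::field pub \<Rightarrow> ('sd,'k,'cm,'h,'h1) prims \<Rightarrow> nat \<Rightarrow> 'sd
     \<Rightarrow> (nat \<Rightarrow> 'k) \<Rightarrow> (nat \<Rightarrow> 'k) \<Rightarrow> 'h" where
  "pr_h0 P Pr D sd0 x beta =
     hash0 Pr (map (\<lambda>i. com Pr (pr_state P Pr D sd0 x beta i)) [0..<2^D])"

text \<open>Share of main party (d,b) (b = 0 stands for index 1, b = 1 for index 2).\<close>
definition pr_main :: "'k::field pub \<Rightarrow> ('sd,'k,'cm,'h,'h1) prims \<Rightarrow> nat \<Rightarrow> 'sd
     \<Rightarrow> (nat \<Rightarrow> 'k) \<Rightarrow> (nat \<Rightarrow> 'k) \<Rightarrow> nat \<Rightarrow> nat \<Rightarrow> 'k shr" where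
  "pr_main P Pr D sd0 x beta d b =
     shr_sum {i. i < 2^D \<and> bit_of d i = b} (pr_leaf P Pr D sd0 x beta)"

definition pr_Hd :: "'k::field pub \<Rightarrow> ('sd,'k,'cm,'h,'h1) prims \<Rightarrow> nat \<Rightarrow> 'sd
     \<Rightarrow> (nat \<Rightarrow> 'k) \<Rightarrow> (nat \<Rightarrow> 'k) \<Rightarrow> (nat \<Rightarrow> 'k) \<Rightarrow> 'k \<Rightarrow> nat \<Rightarrow> 'h1" where
  "pr_Hd P Pr D sd0 x beta gam eps d =
     (let s0 = pr_main P Pr D sd0 x beta d 0; s1 = pr_main P Pr D sd0 x beta d 1;
          a0 = alpha_sh P gam eps True s0; a1 = alpha_sh P gam eps False s1;
          al = (\<lambda>i. a0 i + a1 i);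
          v0 = v_sh P gam eps al True s0; v1 = v_sh P gam eps al False s1
      in hashd Pr (map a0 [1..<rr P], map a1 [1..<rr P], v0, v1))"

definition pr_h1 :: "'k::field pub \<Rightarrow> ('sd,'k,'cm,'h,'h1) prims \<Rightarrow> nat \<Rightarrow> 'sd
     \<Rightarrow> (nat \<Rightarrow> 'k) \<Rightarrow> (nat \<Rightarrow> 'k) \<Rightarrow> (nat \<Rightarrow> 'k) \<Rightarrow> 'k \<Rightarrow> 'h" where
  "pr_h1 P Pr D sd0 x beta gam eps =
     hash1 Pr (map (pr_Hd P Pr D sd0 x beta gam eps) [0..<D])"

text \<open>Response to i*: sibling path (seed at depth l, for l = 1..D), correction of the
  last leaf (if i* is not the last leaf), commitment of leaf i*, alpha-share of leaf i*.\<close>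
record ('sd, 'k, 'cm) resp =
  rpath :: "nat \<Rightarrow> 'sd"
  raux :: "'k shr option"
  rcom :: 'cm
  ralpha :: "nat \<Rightarrow> 'k"

definition pr_resp :: "'k::field pub \<Rightarrow> ('sd,'k,'cm,'h,'h1) prims \<Rightarrow> nat \<Rightarrow> 'sd
     \<Rightarrow> (nat \<Rightarrow> 'k) \<Rightarrow> (nat \<Rightarrow> 'k) \<Rightarrow> (nat \<Rightarrow> 'k) \<Rightarrow> 'k \<Rightarrow> nat \<Rightarrow> ('sd,'k,'cm) resp" where
  "pr_resp P Pr D sd0 x beta gam eps ist =
     \<lparr>rpath = (\<lambda>l. ggm (prg Pr) sd0 l (sibling (ist div 2 ^ (D - l)))),
      raux = (if ist \<noteq> 2^D - 1 then Some (pr_aux P Pr D sd0 x beta) else None),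
      rcom = com Pr (pr_state P Pr D sd0 x beta ist),
      ralpha = alpha_sh P gam eps (ist = 0) (pr_leaf P Pr D sd0 x beta ist)\<rparr>"

definition vf_seed :: "('sd,'k,'cm,'h,'h1) prims \<Rightarrow> nat \<Rightarrow> nat \<Rightarrow> ('sd,'k,'cm) resp \<Rightarrow> nat \<Rightarrow> 'sd" where
  "vf_seed Pr D ist R i =
     (let l = (LEAST l. 1 \<le> l \<and> i div 2 ^ (D - l) \<noteq> ist div 2 ^ (D - l))
      in ggm (prg Pr) (rpath R l) (D - l) (i mod 2 ^ (D - l)))"

definition vf_state :: "('sd,'k,'cm,'h,'h1) prims \<Rightarrow> nat \<Rightarrow> nat \<Rightarrow> ('sd,'k,'cm) resp
     \<Rightarrow> nat \<Rightarrow> 'sd \<times> 'k shr option" where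
  "vf_state Pr D ist R i = (vf_seed Pr D ist R i, if i = 2^D - 1 then raux R else None)"

definition vf_leaf :: "('sd,'k,'cm,'h,'h1) prims \<Rightarrow> nat \<Rightarrow> nat \<Rightarrow> ('sd,'k,'cm) resp
     \<Rightarrow> nat \<Rightarrow> 'k shr" where
  "vf_leaf Pr D ist R i = leaf_sh (expand Pr) (vf_state Pr D ist R i)"

definition vf_h0 :: "('sd,'k,'cm,'h,'h1) prims \<Rightarrow> nat \<Rightarrow> nat \<Rightarrow> ('sd,'k,'cm) resp \<Rightarrow> 'h" where
  "vf_h0 Pr D ist R =
     hash0 Pr (map (\<lambda>i. if i = ist then rcom R else com Pr (vf_state Pr D ist R i)) [0..<2^D])"

definition vf_alpha_parts :: "'k::field pub \<Rightarrow> ('sd,'k,'cm,'h,'h1) prims \<Rightarrow> nat \<Rightarrow> (nat \<Rightarrow> 'k) \<Rightarrow> 'k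
     \<Rightarrow> nat \<Rightarrow> ('sd,'k,'cm) resp \<Rightarrow> nat \<Rightarrow> nat \<Rightarrow> nat \<Rightarrow> 'k" where
  "vf_alpha_parts P Pr D gam eps ist R d b =
     (if b = bit_of d ist then
        (\<lambda>j. (\<Sum>i\<in>{i. i < 2^D \<and> bit_of d i = b \<and> i \<noteq> ist}.
                 alpha_sh P gam eps (i = 0) (vf_leaf Pr D ist R i) j) + ralpha R j)
      else alpha_sh P gam eps (b = 0) (shr_sum {i. i < 2^D \<and> bit_of d i = b} (vf_leaf Pr D ist R)))"

definition vf_alpha :: "'k::field pub \<Rightarrow> ('sd,'k,'cm,'h,'h1) prims \<Rightarrow> nat \<Rightarrow> (nat \<Rightarrow> 'k) \<Rightarrow> 'k
     \<Rightarrow> nat \<Rightarrow> ('sd,'k,'cm) resp \<Rightarrow> nat \<Rightarrow> nat \<Rightarrow> 'k" where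
  "vf_alpha P Pr D gam eps ist R d =
     (\<lambda>j. vf_alpha_parts P Pr D gam eps ist R d 0 j + vf_alpha_parts P Pr D gam eps ist R d 1 j)"

text \<open>Recomputed H_d: v-share of the other main party is computed, the v-share of the
  main party containing i* is set such that v = 0.\<close>
definition vf_Hd :: "'k::field pub \<Rightarrow> ('sd,'k,'cm,'h,'h1) prims \<Rightarrow> nat \<Rightarrow> (nat \<Rightarrow> 'k) \<Rightarrow> 'k
     \<Rightarrow> nat \<Rightarrow> ('sd,'k,'cm) resp \<Rightarrow> nat \<Rightarrow> 'h1" where
  "vf_Hd P Pr D gam eps ist R d =
     (let bs = bit_of d ist; bo = 1 - bs;
          al = vf_alpha P Pr D gam eps ist R d;
          vo = v_sh P gam eps al (bo = 0) (shr_sum {i. i < 2^D \<and> bit_of d i = bo} (vf_leaf Pr D ist R));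
          vs = - vo;
          v0 = (if bs = 0 then vs else vo); v1 = (if bs = 0 then vo else vs)
      in hashd Pr (map (vf_alpha_parts P Pr D gam eps ist R d 0) [1..<rr P],
                   map (vf_alpha_parts P Pr D gam eps ist R d 1) [1..<rr P], v0, v1))"

definition verifier_accepts :: "'k::field pub \<Rightarrow> ('sd,'k,'cm,'h,'h1) prims \<Rightarrow> nat
     \<Rightarrow> 'h \<Rightarrow> (nat \<Rightarrow> 'k) \<Rightarrow> 'k \<Rightarrow> 'h \<Rightarrow> nat \<Rightarrow> ('sd,'k,'cm) resp \<Rightarrow> bool" where
  "verifier_accepts P Pr D h0 gam eps h1 ist R \<longleftrightarrow>
     vf_h0 Pr D ist R = h0
     \<and> (\<forall>d<D. map (vf_alpha P Pr D gam eps ist R d) [1..<rr P]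
               = map (vf_alpha P Pr D gam eps ist R 0) [1..<rr P])
     \<and> hash1 Pr (map (vf_Hd P Pr D gam eps ist R) [0..<D]) = h1"

text \<open>Outcome of an honest execution with prover randomness \<open>sd0\<close> (sd0 seed of the GGM
  tree, from which all leaf shares and a are derived) and verifier challenges
  (gam, eps) and i*.\<close>
definition honest_accepts :: "'k::field pub \<Rightarrow> ('sd,'k,'cm,'h,'h1) prims \<Rightarrow> nat
     \<Rightarrow> (nat \<Rightarrow> 'k) \<Rightarrow> (nat \<Rightarrow> 'k) \<Rightarrow> 'sd \<Rightarrow> (nat \<Rightarrow> 'k) \<Rightarrow> 'k \<Rightarrow> nat \<Rightarrow> bool" where
  "honest_accepts P Pr D x beta sd0 gam eps ist =
     verifier_accepts P Pr D (pr_h0 P Pr D sd0 x beta) gam eps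
        (pr_h1 P Pr D sd0 x beta gam eps) ist (pr_resp P Pr D sd0 x beta gam eps ist)"

end

theory Submission
  imports Defs "HOL-Computational_Algebra.Primes"
begin

lemma frob_p:
  fixes a b :: "'k::field"
  assumes "prime p" "CHAR('k) = p"
  shows "(a+b)^p = a^p + b^p"
proof -
  have p0: "p \<noteq> 0" using assms prime_gt_0_nat by auto
  have "(a+b)^p = (\<Sum>k\<le>p. of_nat (p choose k) * a^k * b^(p-k))"
    by (rule binomial_ring)
  also have "\<dots> = (\<Sum>k\<le>p. (if k = p then a^p else 0) + (if k = 0 then b^p else 0))"
  proof (rule sum.cong)
    fix k assume k: "k \<in> {..p}"
    show "of_nat (p choose k) * a^k * b^(p-k) = (if k = p then a^p else 0) + (if k = 0 then b^p else 0)"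
    proof (cases "k = 0 \<or> k = p")
      case True then show ?thesis using p0 by auto
    next
      case False
      then have "p dvd (p choose k)" using k p0 assms(1) by (intro dvd_choose_prime) auto
      then have "of_nat (p choose k) = (0::'k)" using assms(2) of_nat_eq_0_iff_char_dvd by metis
      then show ?thesis using False by simp
    qed
  qed simp
  also have "\<dots> = a^p + b^p" by (simp add: sum.distrib)
  finally show ?thesis .
qed

lemma frob_pow:
  fixes a b :: "'k::field"
  assumes "prime p" "CHAR('k) = p"
  shows "(a+b)^(p^n) = a^(p^n) + b^(p^n)"
proof (induction n arbitrary: a b)
  case 0 then show ?case by simp
next
  case (Suc n)
  have "(a+b)^(p^Suc n) = ((a+b)^p)^(p^n)" by (simp add: power_mult)
  also have "\<dots> = (a^p + b^p)^(p^n)" using frob_p[OF assms] by simp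
  also have "\<dots> = (a^p)^(p^n) + (b^p)^(p^n)" by (rule Suc.IH)
  also have "\<dots> = a^(p^Suc n) + b^(p^Suc n)" by (simp add: power_mult)
  finally show ?case .
qed

lemma frob_zero:
  fixes Q :: nat
  assumes "\<forall>a b::'k::field. (a+b)^Q = a^Q + b^Q"
  shows "(0::'k)^Q = 0"
proof -
  have "(0::'k)^Q = 0^Q + 0^Q" using assms[rule_format, of 0 0] by simp
  then show ?thesis by (metis add_cancel_right_right)
qed

lemma frob_sum:
  assumes "\<forall>a b::'k::field. (a+b)^Q = a^Q + b^Q" "finite S"
  shows "(\<Sum>i\<in>S. f i :: 'k)^Q = (\<Sum>i\<in>S. (f i)^Q)"
  using assms(2) by (induction S rule: finite_induct) (auto simp: frob_zero[OF assms(1)] assms(1))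

lemma frob_diff:
  assumes "\<forall>a b::'k::field. (a+b)^Q = a^Q + b^Q"
  shows "(a - b :: 'k)^Q = a^Q - b^Q"
  using assms[rule_format, of "a-b" b] by (simp add: eq_diff_eq)

lemma x_sh_sum:
  assumes "finite S"
  shows "x_sh P (0\<in>S) (shr_sum S f) j = (\<Sum>l\<in>S. x_sh P (l=0) (f l) j)"
proof (cases "j < nn P - kk P")
  case True
  have "(\<Sum>l\<in>S. (if l = 0 then yv P j else 0)) = (if 0 \<in> S then yv P j else 0)"
    using assms by (simp add: sum.delta)
  moreover have "(\<Sum>j'<kk P. Hp P j j' * (\<Sum>i\<in>S. sxb (f i) j')) = (\<Sum>l\<in>S. \<Sum>j'<kk P. Hp P j j' * sxb (f l) j')"
    by (simp add: sum_distrib_left sum.swap[of _ S])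
  ultimately show ?thesis using True
    by (simp add: x_sh_def xA_sh_def shr_sum_def sum_subtractf)
qed (simp add: x_sh_def shr_sum_def)

lemma omega_sh_sum:
  fixes P :: "'k::field pub"
  assumes FR: "\<forall>a b::'k::field. (a+b)^(qq P ^ i) = a^(qq P ^ i) + b^(qq P ^ i)"
    and "finite S"
  shows "omega_sh P gam (0\<in>S) (shr_sum S f) i = (\<Sum>l\<in>S. omega_sh P gam (l=0) (f l) i)"
proof -
  have "\<And>j. x_sh P (0\<in>S) (shr_sum S f) j ^ (qq P ^ i) - x_sh P (0\<in>S) (shr_sum S f) j
     = (\<Sum>l\<in>S. x_sh P (l=0) (f l) j ^ (qq P ^ i) - x_sh P (l=0) (f l) j)"
    unfolding x_sh_sum[OF assms(2)] by (simp add: sum_subtractf frob_sum[OF FR assms(2)])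
  then show ?thesis
    by (simp add: omega_sh_def sum_distrib_left sum.swap[of _ S])
qed

lemma z_sh_sum:
  fixes P :: "'k::field pub"
  assumes FR: "\<forall>a b::'k::field. (a+b)^(qq P ^ rr P) = a^(qq P ^ rr P) + b^(qq P ^ rr P)"
    and "finite S"
  shows "z_sh P gam (0\<in>S) (shr_sum S f) = (\<Sum>l\<in>S. z_sh P gam (l=0) (f l))"
proof -
  have "\<And>j. x_sh P (0\<in>S) (shr_sum S f) j ^ (qq P ^ rr P) - x_sh P (0\<in>S) (shr_sum S f) j
     = (\<Sum>l\<in>S. x_sh P (l=0) (f l) j ^ (qq P ^ rr P) - x_sh P (l=0) (f l) j)"
    unfolding x_sh_sum[OF assms(2)] by (simp add: sum_subtractf frob_sum[OF FR assms(2)])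
  then show ?thesis
    by (simp add: z_sh_def sum_distrib_left sum.swap[of _ S] sum_negf)
qed

lemma alpha_sh_sum:
  fixes P :: "'k::field pub"
  assumes FR: "\<forall>a b::'k::field. (a+b)^(qq P ^ i) = a^(qq P ^ i) + b^(qq P ^ i)"
    and "finite S"
  shows "alpha_sh P gam eps (0\<in>S) (shr_sum S f) i = (\<Sum>l\<in>S. alpha_sh P gam eps (l=0) (f l) i)"
  using omega_sh_sum[OF assms]
  by (simp add: alpha_sh_def sum.distrib sum_distrib_left shr_sum_def)

lemma v_sh_sum:
  fixes P :: "'k::field pub"
  assumes FR: "\<forall>a b::'k::field. (a+b)^(qq P ^ rr P) = a^(qq P ^ rr P) + b^(qq P ^ rr P)"
    and "finite S"
  shows "v_sh P gam eps al (0\<in>S) (shr_sum S f) = (\<Sum>l\<in>S. v_sh P gam eps al (l=0) (f l))"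
  using z_sh_sum[OF assms]
  by (simp add: v_sh_def sum_subtractf sum_distrib_left shr_sum_def sum.swap[of _ S])

lemma shr_sum_cong: "(\<And>i. i \<in> A \<Longrightarrow> f i = g i) \<Longrightarrow> shr_sum A f = shr_sum A g"
  unfolding shr_sum_def by (simp cong: sum.cong)

lemma ggm_split: "ggm G s (a+b) j = ggm G (ggm G s a (j div 2^b)) b (j mod 2^b)"
proof (induction b arbitrary: j)
  case 0 then show ?case by simp
next
  case (Suc b)
  have e1: "j div 2 div 2^b = j div 2^Suc b" by (simp add: div_mult2_eq)
  have e2: "j mod 2^Suc b div 2 = j div 2 mod 2^b"
    by (simp add: mod_mult2_eq)
  have e3: "even (j mod 2^Suc b) = even j"
    using dvd_mod_iff[of 2 "2*2^b" j] by simp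
  show ?case using Suc.IH[of "j div 2"] e1 e2 e3 by simp
qed

lemma sib: fixes u v :: nat assumes "u \<noteq> v" "u div 2 = v div 2" shows "u = sibling v"
  using assms unfolding sibling_def by presburger

lemma vf_seed_eq:
  assumes "i < 2^D" "ist < 2^D" "i \<noteq> ist" "D > 0"
    and "rpath R = (\<lambda>l. ggm (prg Pr) sd0 l (sibling (ist div 2^(D-l))))"
  shows "vf_seed Pr D ist R i = ggm (prg Pr) sd0 D i"
proof -
  define Pl where "Pl = (\<lambda>l. 1 \<le> l \<and> i div 2 ^ (D - l) \<noteq> ist div 2 ^ (D - l))"
  define l where "l = (LEAST l. Pl l)"
  have PD: "Pl D" using assms unfolding Pl_def by auto
  have Pl: "Pl l" unfolding l_def by (rule LeastI[of Pl D, OF PD])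
  have lD: "l \<le> D" unfolding l_def by (rule Least_le[of Pl D, OF PD])
  have l1: "1 \<le> l" and ne: "i div 2 ^ (D - l) \<noteq> ist div 2 ^ (D - l)" using Pl Pl_def by auto
  have eqp: "i div 2 ^ (D - l) div 2 = ist div 2 ^ (D - l) div 2"
  proof (cases "l = 1")
    case True
    obtain D' where D': "D = Suc D'" using assms(4) gr0_implies_Suc by blast
    have "i div 2 ^ (D - l) div 2 = i div 2^D" using True D'
      by (simp add: div_mult2_eq[symmetric] mult.commute)
    moreover have "ist div 2 ^ (D - l) div 2 = ist div 2^D" using True D'
      by (simp add: div_mult2_eq[symmetric] mult.commute)
    ultimately show ?thesis using assms(1,2) by simp
  next
    case False
    then have "l - 1 < l" "1 \<le> l - 1" using l1 by auto
    then have "\<not> Pl (l - 1)" unfolding l_def by (metis not_less_Least l_def)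
    then have h: "i div 2 ^ (D - (l-1)) = ist div 2 ^ (D - (l-1))" using \<open>1 \<le> l - 1\<close> Pl_def by auto
    have eqD: "D - (l - 1) = Suc (D - l)" using lD False l1 by auto
    have "i div 2 ^ (Suc (D - l)) = ist div 2 ^ (Suc (D - l))" using h unfolding eqD .
    then show ?thesis by (simp only: power_Suc2 div_mult2_eq)
  qed
  have sb: "i div 2 ^ (D - l) = sibling (ist div 2 ^ (D - l))" by (rule sib[OF ne eqp])
  have "vf_seed Pr D ist R i = ggm (prg Pr) (rpath R l) (D - l) (i mod 2 ^ (D - l))"
    unfolding vf_seed_def Let_def Pl_def[symmetric] l_def[symmetric] ..
  also have "\<dots> = ggm (prg Pr) sd0 (l + (D - l)) i"
    unfolding ggm_split assms(5) sb ..
  also have "l + (D - l) = D" using lD by simp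
  finally show ?thesis .
qed

theorem theorem1:
  fixes P :: "('k::{field,finite}) pub"
    and Pr :: "('sd, 'k, 'cm, 'h, 'h1) prims"
    and p e m eta D :: nat
    and x beta :: "nat \<Rightarrow> 'k"
  assumes "prime p" and "e > 0" and "qq P = p ^ e"
    and "m > 0" and "eta > 0" and "nn P > 0" and "kk P > 0" and "kk P \<le> nn P"
    and "rr P > 0" and "D > 0"
    and "card (UNIV :: 'k set) = qq P ^ (m * eta)" and "CHAR('k) = p"
    \<comment> \<open>the instance lies in F_{q^m}\<close>
    and "\<forall>i<nn P - kk P. \<forall>j<kk P. Hp P i j \<in> subfield_of (qq P ^ m)"
    and "\<forall>i<nn P - kk P. yv P i \<in> subfield_of (qq P ^ m)"
    \<comment> \<open>the witness: x in F_{q^m}^n, Hx = y, rank weight at most r\<close>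
    and "\<forall>j<nn P. x j \<in> subfield_of (qq P ^ m)"
    and "\<forall>i<nn P - kk P. x i + (\<Sum>j<kk P. Hp P i j * x (nn P - kk P + j)) = yv P i"
    and "rank_weight (qq P) (nn P) x \<le> rr P"
    \<comment> \<open>standing assumption on U, and beta = coefficients of the annihilator polynomial of U\<close>
    and "1 \<in> fq_span (qq P) (x ` {..<nn P})"
    and "fq_dim (qq P) (fq_span (qq P) (x ` {..<nn P})) = rr P"
    and "(\<Prod>u\<in>fq_span (qq P) (x ` {..<nn P}). [:- u, 1:])
           = (monom 1 (qq P ^ rr P) - [:0, 1:])
             + (\<Sum>i\<in>{1..<rr P}. smult (beta i) (monom 1 (qq P ^ i) - [:0, 1:]))"
    \<comment> \<open>leaf shares of x_B and beta derived from seeds lie in F_{q^m}\<close>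
    and "\<forall>s j. sxb (expand Pr s) j \<in> subfield_of (qq P ^ m)
              \<and> sbt (expand Pr s) j \<in> subfield_of (qq P ^ m)"
  shows "\<forall>sd0 gam eps ist. ist < 2 ^ D \<longrightarrow>
           honest_accepts P Pr D x beta sd0 gam eps ist"
proof (intro allI impI)
  fix sd0 gam eps ist
  assume ist: "ist < (2::nat) ^ D"
  define R where "R = pr_resp P Pr D sd0 x beta gam eps ist"
  define L where "L = pr_leaf P Pr D sd0 x beta"
  define VL where "VL = vf_leaf Pr D ist R"
  define S where "S = (\<lambda>d b. {i::nat. i < 2^D \<and> bit_of d i = b})"
  define T where "T = shr_sum {..<(2::nat)^D} L"
  have FR: "\<forall>a b::'k. (a+b)^(qq P ^ i) = a^(qq P ^ i) + b^(qq P ^ i)" for i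
  proof (intro allI)
    fix a b :: 'k
    have Q: "qq P ^ i = p ^ (e * i)" using assms(3) by (simp add: power_mult)
    have "(a+b)^(p^(e*i)) = a^(p^(e*i)) + b^(p^(e*i))" by (rule frob_pow[OF assms(1) assms(12)])
    then show "(a+b)^(qq P ^ i) = a^(qq P ^ i) + b^(qq P ^ i)"
      by (simp only: Q)
  qed
  have rp: "rpath R = (\<lambda>l. ggm (prg Pr) sd0 l (sibling (ist div 2^(D-l))))"
    unfolding R_def pr_resp_def by simp
  have state: "vf_state Pr D ist R i = pr_state P Pr D sd0 x beta i"
    if "i < 2^D" "i \<noteq> ist" for i
  proof -
    have "vf_seed Pr D ist R i = pr_seed Pr D sd0 i"
      unfolding pr_seed_def by (rule vf_seed_eq[OF that(1) ist that(2) assms(10) rp])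
    moreover have "(if i = 2^D - 1 then raux R else None) =
       (if i = 2^D - 1 then Some (pr_aux P Pr D sd0 x beta) else None)"
      using that unfolding R_def pr_resp_def by auto
    ultimately show ?thesis unfolding vf_state_def pr_state_def by simp
  qed
  have leafeq: "VL i = L i" if "i < 2^D" "i \<noteq> ist" for i
    unfolding VL_def L_def vf_leaf_def pr_leaf_def using state[OF that] by simp
  have h0: "vf_h0 Pr D ist R = pr_h0 P Pr D sd0 x beta"
    unfolding vf_h0_def pr_h0_def
  proof (intro arg_cong[where f="hash0 Pr"] map_cong refl)
    fix i assume "i \<in> set [0..<2^D]"
    then show "(if i = ist then rcom R else com Pr (vf_state Pr D ist R i)) =
               com Pr (pr_state P Pr D sd0 x beta i)"
      using state unfolding R_def pr_resp_def by auto
  qed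
  have fin: "finite (S d b)" for d b unfolding S_def by simp
  have zeroS: "(0 \<in> S d b) = (b = 0)" for d b unfolding S_def bit_of_def by auto
  have Sunion: "S d 0 \<union> S d 1 = {..<2^D}" for d unfolding S_def bit_of_def by auto
  have Sdisj: "S d 0 \<inter> S d 1 = {}" for d unfolding S_def by auto
  have alpha_b: "alpha_sh P gam eps (b = 0) (shr_sum (S d b) L) j
       = (\<Sum>l\<in>S d b. alpha_sh P gam eps (l = 0) (L l) j)" for b d j
    using alpha_sh_sum[OF FR fin, of gam eps d b L j] zeroS by simp
  have v_b: "v_sh P gam eps al (b = 0) (shr_sum (S d b) L)
       = (\<Sum>l\<in>S d b. v_sh P gam eps al (l = 0) (L l))" for b d al
    using v_sh_sum[OF FR fin, of gam eps al d b L] zeroS by simp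
  have alpha_T: "alpha_sh P gam eps True T j = (\<Sum>l<2^D. alpha_sh P gam eps (l = 0) (L l) j)" for j
    using alpha_sh_sum[OF FR, of "{..<2^D}" gam eps L j] unfolding T_def by simp
  have v_T: "v_sh P gam eps al True T = (\<Sum>l<2^D. v_sh P gam eps al (l = 0) (L l))" for al
    using v_sh_sum[OF FR, of "{..<2^D}" gam eps al L] unfolding T_def by simp
  have alpha_tot: "alpha_sh P gam eps True (shr_sum (S d 0) L) j
      + alpha_sh P gam eps False (shr_sum (S d 1) L) j = alpha_sh P gam eps True T j" for d j
    using alpha_b[where b=0 and d=d and j=j] alpha_b[where b=1 and d=d and j=j] alpha_T[where j=j]
      sum.union_disjoint[OF fin fin Sdisj, of "\<lambda>l. alpha_sh P gam eps (l = 0) (L l) j" d] Sunion[where d=d]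
    by simp
  have v_tot: "v_sh P gam eps al True (shr_sum (S d 0) L)
      + v_sh P gam eps al False (shr_sum (S d 1) L) = v_sh P gam eps al True T" for d al
    using v_b[where b=0 and d=d and al=al] v_b[where b=1 and d=d and al=al] v_T[where al=al]
      sum.union_disjoint[OF fin fin Sdisj, of "\<lambda>l. v_sh P gam eps al (l = 0) (L l)" d] Sunion[where d=d]
    by simp
  have parts: "vf_alpha_parts P Pr D gam eps ist R d b = alpha_sh P gam eps (b=0) (shr_sum (S d b) L)"
    if "b \<le> 1" for d b
  proof (cases "b = bit_of d ist")
    case True
    then have istS: "ist \<in> S d b" using ist unfolding S_def by simp
    have set_eq: "{i. i < 2^D \<and> bit_of d i = b \<and> i \<noteq> ist} = S d b - {ist}"
      unfolding S_def by auto
    have ra: "ralpha R = alpha_sh P gam eps (ist = 0) (L ist)"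
      unfolding R_def L_def pr_resp_def by simp
    show ?thesis
    proof
      fix j
      have "vf_alpha_parts P Pr D gam eps ist R d b j
          = (\<Sum>i\<in>S d b - {ist}. alpha_sh P gam eps (i = 0) (VL i) j) + alpha_sh P gam eps (ist = 0) (L ist) j"
        using True unfolding vf_alpha_parts_def set_eq ra VL_def by simp
      also have "(\<Sum>i\<in>S d b - {ist}. alpha_sh P gam eps (i = 0) (VL i) j)
          = (\<Sum>i\<in>S d b - {ist}. alpha_sh P gam eps (i = 0) (L i) j)"
        by (rule sum.cong) (auto simp: S_def leafeq)
      finally show "vf_alpha_parts P Pr D gam eps ist R d b j = alpha_sh P gam eps (b=0) (shr_sum (S d b) L) j"
        using alpha_b[where b=b and d=d and j=j] sum.remove[OF fin istS, of "\<lambda>i. alpha_sh P gam eps (i = 0) (L i) j"]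
        by (simp add: add.commute)
    qed
  next
    case False
    have "shr_sum (S d b) VL = shr_sum (S d b) L"
      using False by (intro shr_sum_cong leafeq) (auto simp: S_def)
    then show ?thesis using False unfolding vf_alpha_parts_def S_def VL_def by simp
  qed
  have valpha: "vf_alpha P Pr D gam eps ist R d = (\<lambda>j. alpha_sh P gam eps True T j)" for d
    unfolding vf_alpha_def using parts[where b=0 and d=d] parts[where b=1 and d=d] alpha_tot[where d=d] by simp
  have v_zero: "v_sh P gam eps (\<lambda>j. alpha_sh P gam eps True T j) True T = 0"
  proof -
    define M where "M = (2::nat)^D - 1"
    have NM: "(2::nat)^D = Suc M" unfolding M_def by simp
    have M': "(2::nat)^D - Suc 0 = M" unfolding M_def by simp
    define aux where "aux = pr_aux P Pr D sd0 x beta"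
    define E where "E = (\<lambda>i. expand Pr (pr_seed Pr D sd0 i))"
    have Lne: "L i = E i" if "i \<noteq> M" for i
      using that unfolding L_def E_def pr_leaf_def pr_state_def leaf_sh_def M_def by simp
    have LM: "L M = (E M)\<lparr>sxb := sxb aux, sbt := sbt aux, sc := sc aux\<rparr>"
      unfolding L_def E_def pr_leaf_def pr_state_def leaf_sh_def M_def aux_def by simp
    have sumL: "(\<Sum>i<2^D. g (L i)) = (\<Sum>i<M. g (E i)) + g (L M)" for g :: "'k shr \<Rightarrow> 'k"
    proof -
      have "(\<Sum>i<2^D. g (L i)) = (\<Sum>i<M. g (L i)) + g (L M)" unfolding NM by simp
      also have "(\<Sum>i<M. g (L i)) = (\<Sum>i<M. g (E i))" by (rule sum.cong) (auto simp: Lne)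
      finally show ?thesis .
    qed
    have Tsxb: "sxb T j = x (nn P - kk P + j)" for j
      unfolding T_def shr_sum_def using sumL[of "\<lambda>s. sxb s j"]
      by (simp add: LM aux_def pr_aux_def E_def M')
    have Tsbt: "sbt T i = beta i" for i
      unfolding T_def shr_sum_def using sumL[of "\<lambda>s. sbt s i"]
      by (simp add: LM aux_def pr_aux_def E_def M')
    have Tsc: "sc T = pr_c P Pr D sd0 beta"
      unfolding T_def shr_sum_def using sumL[of "\<lambda>s. sc s"]
      by (simp add: LM aux_def pr_aux_def E_def M')
    have Tsa: "sa T i = pr_a Pr D sd0 i" for i
    proof -
      have saL: "sa (L l) = sa (E l)" for l by (cases "l = M") (simp_all add: LM Lne)
      have "sa T i = (\<Sum>l<2^D. sa (E l) i)"
        unfolding T_def shr_sum_def by (simp add: saL)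
      then show ?thesis unfolding pr_a_def E_def .
    qed
    have xT: "x_sh P True T j = x j" if "j < nn P" for j
    proof (cases "j < nn P - kk P")
      case True
      have "x j + (\<Sum>j'<kk P. Hp P j j' * x (nn P - kk P + j')) = yv P j"
        using assms(16) True by blast
      then show ?thesis using True unfolding x_sh_def xA_sh_def
        by (simp add: Tsxb diff_eq_eq)
    next
      case False
      then show ?thesis unfolding x_sh_def using that by (simp add: Tsxb)
    qed
    define U where "U = fq_span (qq P) (x ` {..<nn P})"
    have polyx: "(x j)^(qq P ^ rr P) - x j + (\<Sum>i\<in>{1..<rr P}. beta i * ((x j)^(qq P ^ i) - x j)) = 0"
      if "j < nn P" for j
    proof -
      have xU: "x j \<in> U" unfolding U_def fq_span_def subfield_of_def
        using that by (intro CollectI exI[of _ "{x j}"] exI[of _ "\<lambda>_. 1"]) auto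
      have finU: "finite U" by simp
      have "poly (\<Prod>u\<in>U. [:- u, 1:]) (x j) = (\<Prod>u\<in>U. x j - u)"
        by (simp add: poly_prod)
      also have "\<dots> = 0" using xU finU by (simp add: prod_zero_iff)
      finally have "poly ((monom 1 (qq P ^ rr P) - [:0, 1:])
             + (\<Sum>i\<in>{1..<rr P}. smult (beta i) (monom 1 (qq P ^ i) - [:0, 1:]))) (x j) = 0"
        using assms(20) unfolding U_def by simp
      then show ?thesis by (simp add: poly_sum poly_monom)
    qed
    define A where "A = (\<lambda>j. (x j)^(qq P ^ rr P) - x j)"
    define W where "W = (\<lambda>i j. (x j)^(qq P ^ i) - x j)"
    define a where "a = pr_a Pr D sd0"
    define I where "I = {1..<rr P}"
    have zT: "z_sh P gam True T = - (\<Sum>j<nn P. gam j * A j)"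
      unfolding z_sh_def A_def by (intro arg_cong[where f=uminus] sum.cong refl) (simp add: xT)
    have oT: "omega_sh P gam True T i = (\<Sum>j<nn P. gam j * W i j)" for i
      unfolding omega_sh_def W_def by (intro sum.cong refl) (simp add: xT)
    have Ez: "(\<Sum>i\<in>I. (eps * (\<Sum>j<nn P. gam j * W i j) + a i) * beta i)
       = eps * (\<Sum>j<nn P. gam j * (\<Sum>i\<in>I. beta i * W i j)) + (\<Sum>i\<in>I. beta i * a i)"
    proof -
      have "(\<Sum>i\<in>I. (eps * (\<Sum>j<nn P. gam j * W i j) + a i) * beta i)
          = (\<Sum>i\<in>I. eps * (\<Sum>j<nn P. gam j * W i j) * beta i) + (\<Sum>i\<in>I. beta i * a i)"
        by (simp only: distrib_right sum.distrib mult.commute[of "a _"])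
      also have "(\<Sum>i\<in>I. eps * (\<Sum>j<nn P. gam j * W i j) * beta i)
          = eps * (\<Sum>j<nn P. gam j * (\<Sum>i\<in>I. beta i * W i j))"
        by (simp add: sum_distrib_left sum_distrib_right sum.swap[of _ I] mult_ac)
      finally show ?thesis .
    qed
    have F: "(\<Sum>j<nn P. gam j * A j) + (\<Sum>j<nn P. gam j * (\<Sum>i\<in>I. beta i * W i j)) = 0"
    proof -
      have "(\<Sum>j<nn P. gam j * A j) + (\<Sum>j<nn P. gam j * (\<Sum>i\<in>I. beta i * W i j))
          = (\<Sum>j<nn P. gam j * (A j + (\<Sum>i\<in>I. beta i * W i j)))"
        by (simp add: sum.distrib distrib_left)
      also have "\<dots> = 0"
        unfolding A_def W_def I_def by (rule sum.neutral) (use polyx in auto)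
      finally show ?thesis .
    qed
    have "v_sh P gam eps (\<lambda>j. alpha_sh P gam eps True T j) True T
       = eps * z_sh P gam True T - (\<Sum>i\<in>I. (eps * omega_sh P gam True T i + a i) * beta i)
         + (\<Sum>i\<in>I. beta i * a i)"
      unfolding v_sh_def alpha_sh_def I_def a_def Tsbt Tsa Tsc pr_c_def by simp
    also have "\<dots> = - eps * ((\<Sum>j<nn P. gam j * A j) + (\<Sum>j<nn P. gam j * (\<Sum>i\<in>I. beta i * W i j)))"
      unfolding zT oT Ez by (simp add: algebra_simps)
    also have "\<dots> = 0" using F by simp
    finally show ?thesis .
  qed
  have Hd: "vf_Hd P Pr D gam eps ist R d = pr_Hd P Pr D sd0 x beta gam eps d" for d
  proof -
    define s0 where "s0 = shr_sum (S d 0) L"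
    define s1 where "s1 = shr_sum (S d 1) L"
    define al where "al = (\<lambda>i. alpha_sh P gam eps True s0 i + alpha_sh P gam eps False s1 i)"
    have al_eq: "al = (\<lambda>j. alpha_sh P gam eps True T j)"
      unfolding al_def s0_def s1_def using alpha_tot by simp
    have vsum: "v_sh P gam eps al True s0 + v_sh P gam eps al False s1 = 0"
      unfolding s0_def s1_def using v_tot v_zero al_eq by simp
    have p0: "vf_alpha_parts P Pr D gam eps ist R d 0 = alpha_sh P gam eps True s0"
      using parts[where b=0 and d=d] unfolding s0_def by simp
    have p1: "vf_alpha_parts P Pr D gam eps ist R d 1 = alpha_sh P gam eps False s1"
      using parts[where b=1 and d=d] unfolding s1_def by simp
    have va: "vf_alpha P Pr D gam eps ist R d = al"
      unfolding vf_alpha_def p0 p1 al_def ..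
    have so: "shr_sum {i. i < 2^D \<and> bit_of d i = 1 - bit_of d ist} VL
          = shr_sum (S d (1 - bit_of d ist)) L"
    proof -
      have g: "(n::nat) mod 2 \<noteq> 1 - n mod 2" for n by presburger
      have nb: "bit_of d ist \<noteq> 1 - bit_of d ist" unfolding bit_of_def by (rule g)
      show ?thesis unfolding S_def by (intro shr_sum_cong leafeq) (use nb in auto)
    qed
    have bits: "bit_of d ist = 0 \<or> bit_of d ist = 1" unfolding bit_of_def by auto
    have pm: "pr_main P Pr D sd0 x beta d b = shr_sum (S d b) L" for b
      unfolding pr_main_def S_def L_def ..
    define bs where "bs = bit_of d ist"
    define vo where "vo = v_sh P gam eps al (1 - bs = 0) (shr_sum (S d (1 - bs)) L)"
    have n0: "v_sh P gam eps al True s0 = - v_sh P gam eps al False s1"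
      using vsum by (simp add: eq_neg_iff_add_eq_0)
    have n1: "v_sh P gam eps al False s1 = - v_sh P gam eps al True s0"
      using vsum by (simp add: eq_neg_iff_add_eq_0 add.commute)
    have vo0: "vo = v_sh P gam eps al False s1" if "bs = 0"
      unfolding vo_def s1_def that by simp
    have vo1: "vo = v_sh P gam eps al True s0" if "bs \<noteq> 0"
    proof -
      have "bs = 1" using bits that unfolding bs_def by auto
      then show ?thesis unfolding vo_def s0_def by simp
    qed
    have key0: "(if bs = 0 then - vo else vo) = v_sh P gam eps al True s0"
      using vo0 vo1 n0 by auto
    have key1: "(if bs = 0 then vo else - vo) = v_sh P gam eps al False s1"
      using vo0 vo1 n1 by auto
    have so': "shr_sum {i. i < 2^D \<and> bit_of d i = 1 - bs} (vf_leaf Pr D ist R)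
          = shr_sum (S d (1 - bs)) L"
      using so unfolding bs_def VL_def .
    show ?thesis
      unfolding vf_Hd_def pr_Hd_def Let_def va pm p0 p1
      unfolding bs_def[symmetric] s0_def[symmetric] s1_def[symmetric] al_def[symmetric]
      unfolding so' vo_def[symmetric] key0 key1 ..
  qed
  have c2: "\<forall>d<D. map (vf_alpha P Pr D gam eps ist R d) [1..<rr P]
               = map (vf_alpha P Pr D gam eps ist R 0) [1..<rr P]"
    unfolding valpha by simp
  have c3: "map (vf_Hd P Pr D gam eps ist R) [0..<D] = map (pr_Hd P Pr D sd0 x beta gam eps) [0..<D]"
    by (rule map_cong[OF refl]) (rule Hd)
  show "honest_accepts P Pr D x beta sd0 gam eps ist"
    unfolding honest_accepts_def R_def[symmetric] verifier_accepts_def pr_h1_def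
    by (intro conjI h0 c2) (simp only: c3)
qed

end
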